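(* For every $k\in\mathbb N$, the $k$-th standard Fibonacci-like partition of the first kind $\mathfrak P_k$ is a partition of $\mathbb N$ into exactly $F(k)$ parts. Explicitly: $\mathfrak P_1=\mathfrak P_2=\{\mathbb N\}$, and for $k\geq 3$, with $i=k-3$, the $F(k)$ sets $$R_{i,0},R_{i,1},\ldots,R_{i,F(i+2)-1},\ R_{i+1,0},R_{i+1,1},\ldots,R_{i+1,F(i+1)-1}$$ are pairwise disjoint and their union is $\mathbb N$.
   Context: $\mathbb N=\{1,2,\dots\}$. $\varphi=\frac{1+\sqrt5}{2}$; $a(n)=\lfloor n\varphi\rfloor$ for $n\in\mathbb N$. $F$ is the Fibonacci sequence with $F(0)=0$, $F(1)=F(2)=1$, $F(n)=F(n-1)+F(n-2)$. For $i\in\mathbb Z^{\geq 0}$, $j\in\mathbb Z$: $f_{i,j}(n)=F(i+1)a(n)+F(i)n-j$ ($n\in\mathbb N$) and $R_{i,j}=\{f_{i,j}(n)\mid n\in\mathbb N\}$. The $k$-th standard Fibonacci-like partition of the first kind is $\mathfrak P_1=\mathfrak P_2=\{\mathbb N\}$ and, for $k\ge 3$, $\mathfrak P_k=\{R_{i,0},\ldots,R_{i,F(i+2)-1},R_{i+1,0},\ldots,R_{i+1,F(i+1)-1}\}$ with $i=k-3$. *)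

theory Defs
  imports Complex_Main "HOL-Number_Theory.Fib"
begin

definition Npos :: "int set" where "Npos = {n. n \<ge> 1}"

definition phi :: real where "phi = (1 + sqrt 5) / 2"

definition a :: "int \<Rightarrow> int" where "a n = \<lfloor>real_of_int n * phi\<rfloor>"

definition f :: "nat \<Rightarrow> int \<Rightarrow> int \<Rightarrow> int" where
  "f i j n = int (fib (i+1)) * a n + int (fib i) * n - j"

definition R :: "nat \<Rightarrow> int \<Rightarrow> int set" where
  "R i j = f i j ` Npos"

definition Idx :: "nat \<Rightarrow> (nat \<times> int) set" where
  "Idx k = (let i = k - 3 in
     {(i, j) | j. 0 \<le> j \<and> j \<le> int (fib (i+2)) - 1} \<union>
     {(i+1, j) | j. 0 \<le> j \<and> j \<le> int (fib (i+1)) - 1})"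

definition PP :: "nat \<Rightarrow> int set set" where
  "PP k = (if k \<le> 2 then {Npos} else (\<lambda>(i,j). R i j) ` Idx k)"

end

theory Submission
  imports Defs "HOL-Computational_Algebra.Primes"
begin

lemma sqrt5_irr: "sqrt (real (5::nat)) \<notin> \<rat>"
proof
  have e: "{2..<5::nat} = {2,3,4}" by auto
  have pr: "prime (5::nat)" by (simp add: prime_nat_iff' e)
  let ?p = "5::nat"
  have p: "?p > 1" by simp
  assume "sqrt ?p \<in> \<rat>"
  then obtain m n :: nat
    where n: "n \<noteq> 0"
      and sqrt_rat: "\<bar>sqrt ?p\<bar> = m / n"
      and "coprime m n" by (rule Rats_abs_nat_div_natE)
  from n and sqrt_rat have "m = \<bar>sqrt ?p\<bar> * n" by simp
  then have "m\<^sup>2 = (sqrt ?p)\<^sup>2 * n\<^sup>2" by (auto simp add: power2_eq_square)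
  also have "(sqrt ?p)\<^sup>2 = ?p" by simp
  also have "\<dots> * n\<^sup>2 = ?p * n\<^sup>2" by simp
  finally have eq: "m\<^sup>2 = ?p * n\<^sup>2" by linarith
  then have "?p dvd m\<^sup>2" ..
  with pr have dvd_m: "?p dvd m" by (rule prime_dvd_power)
  then obtain k where "m = ?p * k" ..
  with eq have "?p * n\<^sup>2 = ?p\<^sup>2 * k\<^sup>2" by algebra
  with p have "n\<^sup>2 = ?p * k\<^sup>2" by (simp add: power2_eq_square)
  then have "?p dvd n\<^sup>2" ..
  with pr have "?p dvd n" by (rule prime_dvd_power)
  with dvd_m have "?p dvd gcd m n" by (rule gcd_greatest)
  with \<open>coprime m n\<close> have "?p = 1" by simp
  with p show False by simp
qed

lemma phi_irr: "phi \<notin> \<rat>"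
proof
  assume "phi \<in> \<rat>"
  then have "2 * phi - 1 \<in> \<rat>" by simp
  moreover have "2 * phi - 1 = sqrt (real (5::nat))" unfolding phi_def by (simp add: field_simps)
  ultimately show False using sqrt5_irr by simp
qed

lemma phi_sq: "phi * phi = phi + 1"
  unfolding phi_def by (simp add: field_simps)

lemma phi_gt1: "phi > 1" and phi_lt2: "phi < 2"
proof -
  have "sqrt 5 > (1::real)" by simp
  moreover have "sqrt 5 < (3::real)"
    by (rule real_less_lsqrt) auto
  ultimately show "phi > 1" "phi < 2" unfolding phi_def by auto
qed

lemma int_phi_ne: "n \<noteq> 0 \<Longrightarrow> real_of_int n * phi \<noteq> real_of_int m"
proof
  assume "n \<noteq> 0" "real_of_int n * phi = real_of_int m"
  then have "phi = real_of_int m / real_of_int n" by (simp add: field_simps)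
  then have "phi \<in> \<rat>" by (metis Rats_divide Rats_of_int)
  with phi_irr show False by simp
qed

lemma a_bounds: assumes "n \<noteq> 0"
  shows "real_of_int (a n) < real_of_int n * phi" "real_of_int n * phi < real_of_int (a n) + 1"
proof -
  have "real_of_int (a n) \<le> real_of_int n * phi" unfolding a_def by linarith
  moreover have "real_of_int n * phi \<noteq> real_of_int (a n)" using int_phi_ne assms by blast
  ultimately show "real_of_int (a n) < real_of_int n * phi" by simp
  show "real_of_int n * phi < real_of_int (a n) + 1" unfolding a_def by linarith
qed

lemma psi_facts: "phi * (phi - 1) = 1" "phi - 1 > 0" "phi - 1 < 1"
  using phi_sq phi_gt1 phi_lt2 by (auto simp: algebra_simps)

lemma a_a: assumes "n \<ge> 1" shows "a (a n) = a n + n - 1"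
proof -
  define t where "t = real_of_int n * phi - real_of_int (a n)"
  have t: "0 < t" "t < 1" using a_bounds[of n] assms by (auto simp: t_def)
  have an: "real_of_int (a n) = real_of_int n * phi - t" by (simp add: t_def)
  have "real_of_int (a n) * phi = real_of_int n * (phi * phi) - t * phi"
    unfolding an by (simp add: algebra_simps)
  also have "\<dots> = real_of_int (a n + n - 1) + (1 - t * (phi - 1))"
    unfolding phi_sq by (simp add: an algebra_simps)
  finally have eq: "real_of_int (a n) * phi = real_of_int (a n + n - 1) + (1 - t * (phi - 1))" .
  have "0 < t * (phi - 1)" using t psi_facts by simp
  moreover have "t * (phi - 1) < 1 * 1" using t psi_facts
    by (intro mult_strict_mono) auto
  ultimately show ?thesis unfolding a_def[of "a n"] eq floor_eq_iff by linarith
qed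

lemma a_b: assumes "n \<ge> 1" shows "a (a n + n) = 2 * a n + n"
proof -
  define t where "t = real_of_int n * phi - real_of_int (a n)"
  have t: "0 < t" "t < 1" using a_bounds[of n] assms by (auto simp: t_def)
  have an: "real_of_int (a n) = real_of_int n * phi - t" by (simp add: t_def)
  have "real_of_int (a n + n) * phi = real_of_int n * (phi * phi) - t * phi + real_of_int n * phi"
    unfolding of_int_add an by (simp add: algebra_simps)
  also have "\<dots> = real_of_int (2 * a n + n) + t * (2 - phi)"
    unfolding phi_sq by (simp add: an algebra_simps)
  finally have eq: "real_of_int (a n + n) * phi = real_of_int (2 * a n + n) + t * (2 - phi)" .
  have "0 < t * (2 - phi)" using t phi_lt2 by simp
  moreover have "t * (2 - phi) < 1 * 1" using t phi_gt1 phi_lt2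
    by (intro mult_strict_mono) auto
  ultimately show ?thesis unfolding a_def[of "a n + n"] eq floor_eq_iff by linarith
qed

lemma a_pos: assumes "n \<ge> 1" shows "a n \<ge> 1"
proof -
  have "real_of_int n * phi \<ge> 1 * 1" using assms phi_gt1 by (intro mult_mono) auto
  then show ?thesis unfolding a_def by (simp add: le_floor_iff)
qed

lemma a_mono: assumes "n < m" shows "a n < a m"
proof -
  have "real_of_int m \<ge> real_of_int n + 1" using assms by simp
  then have "real_of_int m * phi \<ge> (real_of_int n + 1) * phi" using phi_gt1 by (intro mult_right_mono) auto
  then have "real_of_int m * phi \<ge> real_of_int n * phi + 1" using phi_gt1 by (simp add: algebra_simps)
  then show ?thesis unfolding a_def by linarith
qed

lemma beatty_disj: assumes "n \<ge> 1" "n' \<ge> 1" "a n = a n' + n'" shows False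
proof -
  define m where "m = a n"
  define psi where "psi = phi - 1"
  have ps: "phi * psi = 1" "psi > 0" "psi < 1" using psi_facts by (auto simp: psi_def)
  have "psi * psi = 1 - psi" using phi_sq by (simp add: psi_def algebra_simps)
  have b1: "real_of_int m < real_of_int n * phi" "real_of_int n * phi < real_of_int m + 1"
    using a_bounds[of n] assms by (auto simp: m_def)
  have b2: "real_of_int m - n' < real_of_int n' * phi" "real_of_int n' * phi < real_of_int m - n' + 1"
    using a_bounds[of n'] assms by (auto simp: m_def)
  have "real_of_int m * psi < real_of_int n * phi * psi" using b1 ps by simp
  then have c1: "real_of_int m * psi < real_of_int n" using ps by (simp add: mult.assoc)
  have "(real_of_int n * phi) * psi < (real_of_int m + 1) * psi" using b1 ps by simp
  then have c2: "real_of_int n < (real_of_int m + 1) * psi" using ps by (simp add: mult.assoc)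
  have "real_of_int m * psi < (real_of_int n' * phi + n') * psi" using b2 ps by simp
  also have "(real_of_int n' * phi + n') * psi = n' * (phi * psi) + n' * psi" by (simp add: algebra_simps)
  finally have "real_of_int m * psi < n' + n' * psi" using ps by simp
  then have "real_of_int m * psi * psi < (n' + n' * psi) * psi" using ps by simp
  also have "(n' + n' * psi) * psi = n' * psi + n' * (psi * psi)" by (simp add: algebra_simps)
  also have "\<dots> = n'" unfolding \<open>psi * psi = 1 - psi\<close> by (simp add: algebra_simps)
  finally have c3': "real_of_int m * psi * psi < n'" .
  have "real_of_int m * psi * psi = real_of_int m * (psi * psi)" by (simp add: mult.assoc)
  also have "\<dots> = real_of_int m - real_of_int m * psi" unfolding \<open>psi * psi = 1 - psi\<close> by (simp add: algebra_simps)
  finally have c3: "real_of_int m - real_of_int m * psi < n'" using c3' by linarith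
  have "(real_of_int n' * phi + n') * psi < (real_of_int m + 1) * psi" using b2 ps by simp
  also have "(real_of_int n' * phi + n') * psi = n' * (phi * psi) + n' * psi" by (simp add: algebra_simps)
  finally have "n' + n' * psi < (real_of_int m + 1) * psi" using ps by simp
  then have "(n' + n' * psi) * psi < (real_of_int m + 1) * psi * psi" using ps by simp
  also have "(n' + n' * psi) * psi = n' * psi + n' * (psi * psi)" by (simp add: algebra_simps)
  also have "(real_of_int m + 1) * psi * psi = (real_of_int m + 1) * (psi * psi)" by (simp add: algebra_simps)
  also have "(real_of_int m + 1) * (psi * psi) = (real_of_int m + 1) - (real_of_int m + 1) * psi"
    unfolding \<open>psi * psi = 1 - psi\<close> by (simp add: algebra_simps)
  finally have c4': "n' * psi + n' * (psi * psi) < (real_of_int m + 1) - (real_of_int m + 1) * psi" .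
  have "n' * psi + n' * (psi * psi) = n'" unfolding \<open>psi * psi = 1 - psi\<close> by (simp add: algebra_simps)
  with c4' have c4: "n' < (real_of_int m + 1) - (real_of_int m + 1) * psi" by simp
  have "real_of_int m < real_of_int (n + n')" using c1 c3 by simp
  then have i1: "m < n + n'" by (simp only: of_int_less_iff)
  have "real_of_int (n + n') < real_of_int (m + 1)" using c2 c4 by simp
  then have "n + n' < m + 1" by (simp only: of_int_less_iff)
  with i1 show False by linarith
qed

lemma beatty_cover: assumes "m \<ge> 1" shows "(\<exists>n\<ge>1. a n = m) \<or> (\<exists>n\<ge>1. a n + n = m)"
proof -
  define psi where "psi = phi - 1"
  have ps: "phi * psi = 1" "psi > 0" "psi < 1" using psi_facts by (auto simp: psi_def)
  have sq: "phi * phi = phi + 1" by (rule phi_sq)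
  define u where "u = real_of_int m * psi"
  define v where "v = real_of_int (m + 1) * psi"
  have nonint: "real_of_int z * psi \<noteq> real_of_int w" if "z \<noteq> 0" for z w
  proof
    assume "real_of_int z * psi = real_of_int w"
    then have "real_of_int z * phi = real_of_int (w + z)" by (simp add: psi_def algebra_simps)
    with int_phi_ne[OF that] show False by blast
  qed
  define N where "N = \<lfloor>v\<rfloor>"
  have "real_of_int N \<noteq> v" using nonint[of "m+1" N] assms unfolding v_def by auto
  moreover have "real_of_int N \<le> v" unfolding N_def by (rule of_int_floor_le)
  ultimately have Nv: "real_of_int N < v" by simp
  have vN: "v - 1 < real_of_int N" unfolding N_def by linarith
  have uN: "real_of_int N \<noteq> u" using nonint[of m N] assms unfolding u_def by auto
  have u0: "u > 0" using assms ps unfolding u_def by simp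
  have uv: "v = u + psi" unfolding u_def v_def by (simp add: algebra_simps)
  show ?thesis
  proof (cases "real_of_int N > u")
    case True
    have "N \<ge> 1" using True u0 by linarith
    have "real_of_int N * phi > u * phi" using True phi_gt1 by simp
    moreover have "u * phi = real_of_int m" unfolding u_def using ps by (simp add: algebra_simps)
    moreover have "real_of_int N * phi < v * phi" using Nv phi_gt1 by simp
    moreover have "v * phi = real_of_int m + 1" unfolding v_def using ps by (simp add: algebra_simps)
    ultimately have "a N = m" unfolding a_def by (simp add: floor_eq_iff)
    with \<open>N \<ge> 1\<close> show ?thesis by blast
  next
    case False
    then have Nu: "real_of_int N < u" using uN by simp
    have "u < real_of_int m" using ps assms unfolding u_def by simp
    then have n1: "m - N \<ge> 1" using Nu by linarith
    have "real_of_int N * (phi * phi) < u * (phi * phi)" using Nu phi_gt1 by simp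
    also have "u * (phi * phi) = real_of_int m * (phi * psi) * phi" unfolding u_def
      by (simp add: algebra_simps)
    also have "\<dots> = real_of_int m * phi" using ps(1) by simp
    finally have d1: "real_of_int N * (phi + 1) < real_of_int m * phi" unfolding sq .
    have "(v - 1) * (phi * phi) < real_of_int N * (phi * phi)" using vN phi_gt1 by simp
    moreover have "(v - 1) * (phi * phi) = real_of_int m * phi - 1"
    proof -
      have "(v - 1) * (phi * phi) = real_of_int (m+1) * (phi * psi) * phi - phi * phi"
        unfolding v_def by (simp add: algebra_simps)
      also have "\<dots> = real_of_int m * phi - 1" unfolding ps(1) sq by (simp add: algebra_simps)
      finally show ?thesis .
    qed
    ultimately have d2: "real_of_int m * phi - 1 < real_of_int N * (phi + 1)" unfolding sq by simp
    have "real_of_int N \<le> real_of_int (m - N) * phi" using d1 by (simp add: algebra_simps)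
    moreover have "real_of_int (m - N) * phi < real_of_int N + 1" using d2 by (simp add: algebra_simps)
    ultimately have "a (m - N) = N" unfolding a_def by (simp add: floor_eq_iff)
    then have "a (m - N) + (m - N) = m" by simp
    with n1 show ?thesis by blast
  qed
qed

abbreviation Fi :: "nat \<Rightarrow> int" where "Fi i \<equiv> int (fib i)"

lemma fib_rec2: "Fi (i+2) = Fi (i+1) + Fi i"
  by (simp add: numeral_2_eq_2)

lemma f_a: assumes "n \<ge> 1" shows "f i j (a n) = f (i+1) (j + Fi (i+1)) n"
proof -
  have "Fi (i+1+1) = Fi (i+1) + Fi i" by simp
  then show ?thesis unfolding f_def a_a[OF assms] by (simp add: algebra_simps)
qed

lemma f_b: assumes "n \<ge> 1" shows "f i j (a n + n) = f (i+2) j n"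
proof -
  have "Fi (i+2+1) = 2 * Fi (i+1) + Fi i" "Fi (i+2) = Fi (i+1) + Fi i"
    by (simp_all add: numeral_2_eq_2 numeral_3_eq_3)
  then show ?thesis unfolding f_def a_b[OF assms] by (simp add: algebra_simps)
qed

lemma f_mono: assumes "n < m" shows "f i j n < f i j m"
proof -
  have "Fi (i+1) \<ge> 1" by (simp add: Suc_le_eq fib_neq_0_nat)
  then have "Fi (i+1) * a n < Fi (i+1) * a m" using a_mono[OF assms] by simp
  moreover have "Fi i * n \<le> Fi i * m" using assms by (simp add: mult_left_mono)
  ultimately show ?thesis unfolding f_def by simp
qed

lemma f_inj: "f i j n = f i j m \<Longrightarrow> n = m"
  using f_mono[of n m i j] f_mono[of m n i j] by (cases "n < m"; cases "m < n") auto

lemma R_split: "R i j = R (i+1) (j + Fi (i+1)) \<union> R (i+2) j"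
proof
  show "R i j \<subseteq> R (i+1) (j + Fi (i+1)) \<union> R (i+2) j"
  proof
    fix x assume "x \<in> R i j"
    then obtain n where n: "n \<ge> 1" "x = f i j n" by (auto simp: R_def Npos_def)
    from beatty_cover[OF n(1)] show "x \<in> R (i+1) (j + Fi (i+1)) \<union> R (i+2) j"
    proof
      assume "\<exists>n'\<ge>1. a n' = n"
      then obtain n' where "n' \<ge> 1" "a n' = n" by blast
      then have "x = f (i+1) (j + Fi (i+1)) n'" using n f_a by metis
      then show ?thesis using \<open>n' \<ge> 1\<close> by (auto simp: R_def Npos_def)
    next
      assume "\<exists>n'\<ge>1. a n' + n' = n"
      then obtain n' where "n' \<ge> 1" "a n' + n' = n" by blast
      then have "x = f (i+2) j n'" using n f_b by metis
      then show ?thesis using \<open>n' \<ge> 1\<close> by (auto simp: R_def Npos_def)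
    qed
  qed
next
  show "R (i+1) (j + Fi (i+1)) \<union> R (i+2) j \<subseteq> R i j"
  proof
    fix x assume "x \<in> R (i+1) (j + Fi (i+1)) \<union> R (i+2) j"
    then show "x \<in> R i j"
    proof
      assume "x \<in> R (i+1) (j + Fi (i+1))"
      then obtain n where n: "n \<ge> 1" "x = f (i+1) (j + Fi (i+1)) n" by (auto simp: R_def Npos_def)
      then have "x = f i j (a n)" using f_a by metis
      moreover have "a n \<ge> 1" using a_pos n by simp
      ultimately show ?thesis by (auto simp: R_def Npos_def)
    next
      assume "x \<in> R (i+2) j"
      then obtain n where n: "n \<ge> 1" "x = f (i+2) j n" by (auto simp: R_def Npos_def)
      then have "x = f i j (a n + n)" using f_b by metis
      moreover have "a n + n \<ge> 1" using a_pos n by (smt (verit))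
      ultimately show ?thesis by (auto simp: R_def Npos_def)
    qed
  qed
qed

lemma R_disj: "R (i+1) (j + Fi (i+1)) \<inter> R (i+2) j = {}"
proof (rule ccontr)
  assume "R (i+1) (j + Fi (i+1)) \<inter> R (i+2) j \<noteq> {}"
  then obtain x where "x \<in> R (i+1) (j + Fi (i+1))" "x \<in> R (i+2) j" by blast
  then obtain n n' where n: "n \<ge> 1" "x = f (i+1) (j + Fi (i+1)) n" "n' \<ge> 1" "x = f (i+2) j n'"
    by (auto simp: R_def Npos_def)
  then have "f i j (a n) = f i j (a n' + n')" using f_a f_b by metis
  then have "a n = a n' + n'" by (rule f_inj)
  with beatty_disj n show False by blast
qed

definition RR :: "nat \<times> int \<Rightarrow> int set" where "RR p = R (fst p) (snd p)"

definition S :: "nat \<Rightarrow> (nat \<times> int) set" where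
  "S i = {(i, j) | j. 0 \<le> j \<and> j < Fi (i+2)} \<union> {(i+1, j) | j. 0 \<le> j \<and> j < Fi (i+1)}"

lemma mem_S: "(x, y) \<in> S i \<longleftrightarrow> (x = i \<and> 0 \<le> y \<and> y < Fi (i+2)) \<or> (x = i+1 \<and> 0 \<le> y \<and> y < Fi (i+1))"
  unfolding S_def by auto

lemma Idx_S: "Idx (i+3) = S i"
  unfolding Idx_def S_def Let_def by auto

definition par :: "nat \<Rightarrow> nat \<times> int \<Rightarrow> nat \<times> int" where
  "par i q = (if fst q = i+1 then (if snd q < Fi (i+1) then q else (i, snd q - Fi (i+1))) else (i, snd q))"

lemma par_S0: assumes "q \<in> S (Suc i)" shows "par i q \<in> S i \<and> RR q \<subseteq> RR (par i q)"
proof -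
  obtain x y where q: "q = (x, y)" by fastforce
  have F3: "Fi (Suc i + 2) = Fi (i+2) + Fi (i+1)"
    using fib_rec2[of "i+1"] by simp
  have F3': "Fi (Suc i + 1) = Fi (i+2)" by simp
  from assms[unfolded q mem_S] F3 F3'
  consider "x = i+1" "0 \<le> y" "y < Fi (i+1)" | "x = i+1" "Fi (i+1) \<le> y" "y < Fi (i+2) + Fi (i+1)"
    | "x = i+2" "0 \<le> y" "y < Fi (i+2)" by fastforce
  then show "par i q \<in> S i \<and> RR q \<subseteq> RR (par i q)"
  proof cases
    case 1
    then have "par i q = q" by (simp add: q par_def)
    then show "par i q \<in> S i \<and> RR q \<subseteq> RR (par i q)" using 1 by (auto simp: q mem_S)
  next
    case 2
    have "R (i+1) y = R (i+1) ((y - Fi (i+1)) + Fi (i+1))" by simp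
    also have "\<dots> \<subseteq> R i (y - Fi (i+1))" using R_split[of i "y - Fi (i+1)"] by blast
    finally have sub: "R (i+1) y \<subseteq> R i (y - Fi (i+1))" .
    have "\<not> y < Fi (i+1)" using 2 by simp
    then have "par i q = (i, y - Fi (i+1))" using 2 by (simp add: q par_def)
    then show "par i q \<in> S i \<and> RR q \<subseteq> RR (par i q)" using 2 sub by (auto simp: q mem_S RR_def)
  next
    case 3
    have "R (i+2) y \<subseteq> R i y" using R_split[of i y] by blast
    moreover have "par i q = (i, y)" using 3 by (simp add: q par_def)
    ultimately show "par i q \<in> S i \<and> RR q \<subseteq> RR (par i q)" using 3 by (auto simp: q mem_S RR_def)
  qed
qed

lemma par_S: assumes "q \<in> S (Suc i)" shows "par i q \<in> S i" "RR q \<subseteq> RR (par i q)"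
  using par_S0[OF assms] by auto

lemma par_sib: assumes "q \<in> S (Suc i)" "q' \<in> S (Suc i)" "q \<noteq> q'" "par i q = par i q'"
  shows "RR q \<inter> RR q' = {}"
proof -
  obtain x y where q: "q = (x, y)" by fastforce
  obtain x' y' where q': "q' = (x', y')" by fastforce
  have F3': "Fi (Suc i + 1) = Fi (i+2)" by simp
  have xs: "x = i+1 \<or> x = i+2" "x' = i+1 \<or> x' = i+2" using assms(1,2) unfolding q q' mem_S by auto
  show ?thesis
  proof (cases "x = i+1 \<and> y < Fi (i+1)")
    case True
    then show ?thesis using assms(3,4) xs unfolding q q' par_def by (auto split: if_splits)
  next
    case c1: False
    show ?thesis
    proof (cases "x' = i+1 \<and> y' < Fi (i+1)")
      case True
      then show ?thesis using assms(3,4) xs c1 unfolding q q' par_def by (auto split: if_splits)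
    next
      case False
      then have "x = i+1 \<and> x' = i+2 \<and> y' = y - Fi (i+1) \<or> x = i+2 \<and> x' = i+1 \<and> y = y' - Fi (i+1)"
        using assms(3,4) xs c1 unfolding q q' par_def by (auto split: if_splits)
      then show ?thesis
      proof
        assume h: "x = i+1 \<and> x' = i+2 \<and> y' = y - Fi (i+1)"
        have "y = y' + Fi (i+1)" using h by simp
        then show ?thesis using R_disj[of i y'] h unfolding q q' RR_def by simp
      next
        assume h: "x = i+2 \<and> x' = i+1 \<and> y = y' - Fi (i+1)"
        have "y' = y + Fi (i+1)" using h by simp
        then show ?thesis using R_disj[of i y] h unfolding q q' RR_def by auto
      qed
    qed
  qed
qed

lemma S0: "S 0 = {(0,0), (1,0)}"
  unfolding S_def by (auto simp: numeral_2_eq_2)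

lemma main:
  "(\<forall>p\<in>S i. RR p \<subseteq> Npos) \<and> (\<forall>m\<in>Npos. \<exists>p\<in>S i. m \<in> RR p) \<and>
   (\<forall>p\<in>S i. \<forall>q\<in>S i. p \<noteq> q \<longrightarrow> RR p \<inter> RR q = {})"
proof (induction i)
  case 0
  have r0: "RR (0,0) = a ` Npos" unfolding RR_def R_def f_def by simp
  have r1: "RR (1,0) = (\<lambda>n. a n + n) ` Npos" unfolding RR_def R_def f_def by simp
  have sub0: "RR (0,0) \<subseteq> Npos"
  proof
    fix x assume "x \<in> RR (0,0)"
    then obtain n where "n \<in> Npos" "x = a n" unfolding r0 by blast
    then show "x \<in> Npos" using a_pos unfolding Npos_def by simp
  qed
  have sub1: "RR (1,0) \<subseteq> Npos"
  proof
    fix x assume "x \<in> RR (1,0)"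
    then obtain n where "n \<in> Npos" "x = a n + n" unfolding r1 by blast
    then show "x \<in> Npos" using a_pos[of n] unfolding Npos_def by simp
  qed
  have cov: "m \<in> RR (0,0) \<or> m \<in> RR (1,0)" if "m \<in> Npos" for m
  proof -
    from that have "m \<ge> 1" by (simp add: Npos_def)
    from beatty_cover[OF this] show ?thesis
    proof
      assume "\<exists>n\<ge>1. a n = m"
      then obtain n where "n \<ge> 1" "a n = m" by blast
      then have "m \<in> a ` Npos" unfolding Npos_def by force
      then show ?thesis unfolding r0 by blast
    next
      assume "\<exists>n\<ge>1. a n + n = m"
      then obtain n where "n \<ge> 1" "a n + n = m" by blast
      then have "m \<in> (\<lambda>n. a n + n) ` Npos" unfolding Npos_def by force
      then show ?thesis unfolding r1 by blast
    qed
  qed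
  have dis: "RR (0,0) \<inter> RR (1,0) = {}"
  proof (rule ccontr)
    assume "RR (0,0) \<inter> RR (1,0) \<noteq> {}"
    then obtain x where "x \<in> a ` Npos" "x \<in> (\<lambda>n. a n + n) ` Npos" unfolding r0 r1 by blast
    then obtain n n' where "n \<in> Npos" "n' \<in> Npos" "a n = a n' + n'" by blast
    then show False using beatty_disj unfolding Npos_def by blast
  qed
  have ne: "(0::nat, 0::int) \<noteq> (1, 0)" by simp
  show ?case unfolding S0 using sub0 sub1 cov dis ne by blast
next
  case (Suc i)
  have IH1: "RR p \<subseteq> Npos" if "p \<in> S i" for p using Suc.IH that by blast
  have IH2: "\<exists>p\<in>S i. m \<in> RR p" if "m \<in> Npos" for m using Suc.IH that by blast
  have IH3: "RR p \<inter> RR q = {}" if "p \<in> S i" "q \<in> S i" "p \<noteq> q" for p q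
    using Suc.IH that by blast
  have sub: "RR p \<subseteq> Npos" if "p \<in> S (Suc i)" for p
  proof -
    have "par i p \<in> S i" "RR p \<subseteq> RR (par i p)" using par_S[OF that] by auto
    then show ?thesis using IH1[of "par i p"] by blast
  qed
  have F3: "Fi (i+3) = Fi (i+2) + Fi (i+1)"
    using fib_rec2[of "i+1"] by (simp add: numeral_3_eq_3 numeral_2_eq_2)
  have cov: "\<exists>p\<in>S (Suc i). m \<in> RR p" if mN: "m \<in> Npos" for m
  proof -
    obtain p where p: "p \<in> S i" "m \<in> RR p" using IH2[OF mN] by blast
    obtain x y where pq: "p = (x, y)" by fastforce
    have memS: "(x', y') \<in> S (Suc i) \<longleftrightarrow> (x' = i+1 \<and> 0 \<le> y' \<and> y' < Fi (i+3)) \<or> (x' = i+2 \<and> 0 \<le> y' \<and> y' < Fi (i+2))" for x' y'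
      using mem_S[of x' y' "Suc i"] by (simp add: numeral_3_eq_3 numeral_2_eq_2 del: fib.simps)
    have pc: "(x = i \<and> 0 \<le> y \<and> y < Fi (i+2)) \<or> (x = i+1 \<and> 0 \<le> y \<and> y < Fi (i+1))"
      using p(1) unfolding pq mem_S .
    then show ?thesis
    proof
      assume h: "x = i \<and> 0 \<le> y \<and> y < Fi (i + 2)"
      then have "m \<in> R i y" using p(2) unfolding pq RR_def by simp
      then have "m \<in> R (i+1) (y + Fi (i+1)) \<or> m \<in> R (i+2) y" using R_split[of i y] by blast
      moreover have "(i+1, y + Fi (i+1)) \<in> S (Suc i)" using h F3 memS by simp
      moreover have "(i+2, y) \<in> S (Suc i)" using h memS by simp
      ultimately show ?thesis unfolding RR_def by (metis fst_conv snd_conv)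
    next
      assume h: "x = i + 1 \<and> 0 \<le> y \<and> y < Fi (i + 1)"
      have "Fi (i+1) \<le> Fi (i+3)" using F3 by simp
      then have "(x, y) \<in> S (Suc i)" using h memS by simp
      then show ?thesis using p(2) pq by blast
    qed
  qed
  have dis: "RR p \<inter> RR q = {}" if "p \<in> S (Suc i)" "q \<in> S (Suc i)" "p \<noteq> q" for p q
  proof (cases "par i p = par i q")
    case True
    then show ?thesis using par_sib[OF that True] by blast
  next
    case False
    then have "RR (par i p) \<inter> RR (par i q) = {}"
      using IH3[OF par_S(1)[OF that(1)] par_S(1)[OF that(2)]] by blast
    then show ?thesis using par_S(2)[OF that(1)] par_S(2)[OF that(2)] by blast
  qed
  show ?case using sub cov dis by blast
qed

lemma RR_ne: "RR p \<noteq> {}"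
  unfolding RR_def R_def Npos_def by auto

lemma card_S: "card (S i) = fib (i+3)"
proof -
  have "S i = (\<lambda>j. (i, j)) ` {0..<Fi (i+2)} \<union> (\<lambda>j. (i+1, j)) ` {0..<Fi (i+1)}"
    unfolding S_def by auto
  moreover have "card ((\<lambda>j. (i, j)) ` {0..<Fi (i+2)}) = fib (i+2)"
    by (subst card_image) (auto simp: inj_on_def)
  moreover have "card ((\<lambda>j. (i+1, j)) ` {0..<Fi (i+1)}) = fib (i+1)"
    by (subst card_image) (auto simp: inj_on_def)
  moreover have "(\<lambda>j. (i, j)) ` {0..<Fi (i+2)} \<inter> (\<lambda>j. (i+1, j)) ` {0..<Fi (i+1)} = {}" by auto
  ultimately have "card (S i) = fib (i+2) + fib (i+1)" by (simp add: card_Un_disjoint)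
  also have "\<dots> = fib (i+3)" by (simp add: numeral_3_eq_3 numeral_2_eq_2)
  finally show ?thesis .
qed

theorem theorem3p2:
  fixes k :: nat
  assumes "k \<ge> 1"
  shows "(\<forall>A \<in> PP k. \<forall>B \<in> PP k. A \<noteq> B \<longrightarrow> A \<inter> B = {})
       \<and> \<Union> (PP k) = Npos
       \<and> {} \<notin> PP k
       \<and> card (PP k) = fib k
       \<and> (k \<ge> 3 \<longrightarrow>
            (\<forall>p \<in> Idx k. \<forall>q \<in> Idx k. p \<noteq> q \<longrightarrow>
               R (fst p) (snd p) \<inter> R (fst q) (snd q) = {})
          \<and> (\<Union>p \<in> Idx k. R (fst p) (snd p)) = Npos)"
proof (cases "k \<ge> 3")
  case False
  have PP: "PP k = {Npos}" unfolding PP_def using False by simp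
  have "k = 1 \<or> k = 2" using assms False by auto
  then have fk: "fib k = 1" by (auto simp: numeral_2_eq_2)
  have ne: "Npos \<noteq> {}" unfolding Npos_def by auto
  show ?thesis unfolding PP using fk False ne by simp
next
  case True
  then obtain i where ki: "k = i + 3" by (metis add.commute le_add_diff_inverse)
  have Idx: "Idx k = S i" using Idx_S ki by simp
  have fR: "(\<lambda>(i, j). R i j) = RR" by (auto simp: RR_def fun_eq_iff split: prod.split)
  have PP: "PP k = RR ` S i" unfolding PP_def using True Idx fR by simp
  have M1: "\<forall>p\<in>S i. RR p \<subseteq> Npos" and M2: "\<forall>m\<in>Npos. \<exists>p\<in>S i. m \<in> RR p"
    and M3: "\<forall>p\<in>S i. \<forall>q\<in>S i. p \<noteq> q \<longrightarrow> RR p \<inter> RR q = {}"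
    using main[of i] by blast+
  have U: "\<Union> (RR ` S i) = Npos" using M1 M2 by blast
  have U': "\<Union> (PP k) = Npos" unfolding PP by (rule U)
  have inj: "inj_on RR (S i)"
  proof (rule inj_onI)
    fix p q assume "p \<in> S i" "q \<in> S i" "RR p = RR q"
    then show "p = q" using M3 RR_ne[of p] by blast
  qed
  have "card (PP k) = card (S i)" unfolding PP by (rule card_image[OF inj])
  then have c: "card (PP k) = fib k" using card_S[of i] ki by simp
  have d1: "\<forall>A \<in> PP k. \<forall>B \<in> PP k. A \<noteq> B \<longrightarrow> A \<inter> B = {}"
  proof (intro ballI impI)
    fix A B assume A: "A \<in> PP k" and B: "B \<in> PP k" and AB: "A \<noteq> B"
    from A obtain p where p: "p \<in> S i" "A = RR p" unfolding PP by (rule imageE) simp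
    from B obtain q where q: "q \<in> S i" "B = RR q" unfolding PP by (rule imageE) simp
    have "p \<noteq> q" using AB p q by auto
    then show "A \<inter> B = {}" using M3 p q by simp
  qed
  have d2: "{} \<notin> PP k"
  proof
    assume "{} \<in> PP k"
    then obtain p where "{} = RR p" unfolding PP by (rule imageE)
    then show False using RR_ne[of p] by simp
  qed
  have d3: "\<forall>p \<in> Idx k. \<forall>q \<in> Idx k. p \<noteq> q \<longrightarrow>
               R (fst p) (snd p) \<inter> R (fst q) (snd q) = {}"
    unfolding Idx using M3 unfolding RR_def .
  have d4: "(\<Union>p \<in> Idx k. R (fst p) (snd p)) = Npos" unfolding Idx using U unfolding RR_def .
  show ?thesis using d1 U' d2 c d3 d4 by (intro conjI impI) assumption+
qed

end
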